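(* Fix an even integer $p\geq2$. Let $\mu$ be a probability measure on $\mathbb{R}$ with mean $0$ and finite moments of all orders, and let $w=(w_1,\dots,w_{m_1})$ have i.i.d. components with distribution $\mu$. Let $T_0\subset\mathbb{R}^{m_0}$ be compact and $T_1\subset\mathbb{R}^{m_1}$ be the image of $T_0$ under a map $f\in C^{0,1}(T_0;\mathbb{R}^{m_1})$ with $\|f\|_{C^{0,1}(T_0;\mathbb{R}^{m_1})}\leq\lambda$. Then there is a constant $C=C(T_0,p,\mu,\lambda)$ such that for all $m_1\geq1$, $\mathbb{E}\big[\sup_{y\in T_1}|w\cdot y|^p\big]\leq C$.
   Context: $\|f\|_{C^{0,1}(T_0;\mathbb{R}^{m})}=\sup_{x\in T_0}|f(x)|+\sup_{x\neq y}|f(x)-f(y)|/|x-y|$, with Euclidean norms. *)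

theory Defs
  imports "HOL-Probability.Probability"
begin

text \<open>Vectors in R^m are represented as functions nat \<Rightarrow> real, only coordinates i < m matter.\<close>

definition vnorm :: "nat \<Rightarrow> (nat \<Rightarrow> real) \<Rightarrow> real" where
  "vnorm m y = sqrt (\<Sum>i<m. (y i)\<^sup>2)"

definition vdot :: "nat \<Rightarrow> (nat \<Rightarrow> real) \<Rightarrow> (nat \<Rightarrow> real) \<Rightarrow> real" where
  "vdot m w y = (\<Sum>i<m. w i * y i)"

text \<open>The C^{0,1} norm (sup norm plus Lipschitz seminorm, Euclidean norms), valued in
  ennreal so that it is infinite exactly when f is not in C^{0,1}(T0; R^m).\<close>

definition c01_norm :: "'a::euclidean_space set \<Rightarrow> nat \<Rightarrow> ('a \<Rightarrow> nat \<Rightarrow> real) \<Rightarrow> ennreal" where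
  "c01_norm T0 m f =
     (SUP x\<in>T0. ennreal (vnorm m (f x))) +
     (SUP xy\<in>{(x, y). x \<in> T0 \<and> y \<in> T0 \<and> x \<noteq> y}.
        ennreal (vnorm m (\<lambda>i. f (fst xy) i - f (snd xy) i) / norm (fst xy - snd xy)))"

end

theory Submission
  imports Defs
begin



lemma sum_pow_le_card:
  fixes b :: "'i \<Rightarrow> real"
  assumes "finite I" "I \<noteq> {}" "\<And>i. i \<in> I \<Longrightarrow> 0 \<le> b i"
  shows "(\<Sum>i\<in>I. b i) ^ j \<le> (\<Sum>i\<in>I. (real (card I) * b i) ^ j)"
proof -
  have "Max (b ` I) \<in> b ` I" using assms(1,2) by (intro Max_in) auto
  then obtain i0 where "i0 \<in> I" "b i0 = Max (b ` I)" by auto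
  then have i0: "i0 \<in> I" "\<And>i. i \<in> I \<Longrightarrow> b i \<le> b i0"
    using assms(1) by auto
  have "(\<Sum>i\<in>I. b i) \<le> (\<Sum>i\<in>I. b i0)" by (intro sum_mono i0)
  also have "\<dots> = real (card I) * b i0" by simp
  finally have "(\<Sum>i\<in>I. b i) ^ j \<le> (real (card I) * b i0) ^ j"
    by (intro power_mono) (auto intro: sum_nonneg assms)
  also have "\<dots> \<le> (\<Sum>i\<in>I. (real (card I) * b i) ^ j)"
    using assms i0 by (intro member_le_sum) auto
  finally show ?thesis .
qed

locale momsetup =
  fixes \<mu> :: "real measure"
  assumes prob: "prob_space \<mu>" and sets_mu: "sets \<mu> = sets borel"
    and mean0: "(\<integral>x. x \<partial>\<mu>) = 0"
    and moms: "\<And>k::nat. integrable \<mu> (\<lambda>x. \<bar>x\<bar> ^ k)"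
begin

definition "P m = PiM {..<m} (\<lambda>_::nat. \<mu>)"

lemma prob_P: "prob_space (P m)"
  unfolding P_def by (intro prob_space_PiM prob)

lemma meas_mu_iff: "f \<in> borel_measurable \<mu> \<longleftrightarrow> f \<in> borel_measurable borel"
  by (simp add: measurable_cong_sets[OF sets_mu refl])

lemma int_mu_pow: "integrable \<mu> (\<lambda>x. x ^ k)"
proof -
  have "integrable \<mu> (\<lambda>x. \<bar>x ^ k\<bar>)" using moms[of k] by (simp add: power_abs)
  moreover have "(\<lambda>x. x ^ k) \<in> borel_measurable \<mu>" unfolding meas_mu_iff by measurable
  ultimately show ?thesis using integrable_abs_iff by blast
qed

lemma meas_comp: "i < m \<Longrightarrow> (\<lambda>w. w i) \<in> borel_measurable (P m)"
proof -
  assume "i < m"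
  then have "(\<lambda>w. w i) \<in> measurable (P m) \<mu>" unfolding P_def
    by (intro measurable_component_singleton) auto
  moreover have "(\<lambda>x. x) \<in> borel_measurable \<mu>" unfolding meas_mu_iff by simp
  ultimately show ?thesis using measurable_comp[of _ "P m" \<mu> "\<lambda>x. x" borel] by (simp add: comp_def)
qed

lemma meas_vdot[measurable]: "(\<lambda>w. vdot m w y) \<in> borel_measurable (P m)"
  unfolding vdot_def
  by (intro borel_measurable_sum borel_measurable_times measurable_const meas_comp) auto


lemma int_comp_pow: "i < m \<Longrightarrow> integrable (P m) (\<lambda>w. \<bar>w i\<bar> ^ j)"
proof -
  assume i: "i < m"
  have g: "(\<lambda>w. w i) \<in> measurable (P m) \<mu>" unfolding P_def
    using i by (intro measurable_component_singleton) auto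
  have f: "(\<lambda>x::real. \<bar>x\<bar> ^ j) \<in> borel_measurable \<mu>" unfolding meas_mu_iff by measurable
  have d: "distr (P m) \<mu> (\<lambda>w. w i) = \<mu>" unfolding P_def
    using i by (intro distr_PiM_component prob) auto
  show ?thesis using integrable_distr_eq[OF g f] moms[of j] d by simp
qed

lemma int_vdot_abs_pow: "integrable (P m) (\<lambda>w. \<bar>vdot m w y\<bar> ^ j)"
proof (cases "m = 0")
  case True
  interpret prob_space "P 0" by (rule prob_P)
  show ?thesis using True by (simp add: vdot_def)
next
  case False
  show ?thesis
  proof (rule Bochner_Integration.integrable_bound)
    show "integrable (P m) (\<lambda>w. \<Sum>i<m. (real m * \<bar>y i\<bar>) ^ j * \<bar>w i\<bar> ^ j)"
      by (intro Bochner_Integration.integrable_sum Bochner_Integration.integrable_mult_right int_comp_pow) auto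
    show "(\<lambda>w. \<bar>vdot m w y\<bar> ^ j) \<in> borel_measurable (P m)" by measurable
    show "AE w in P m. norm (\<bar>vdot m w y\<bar> ^ j) \<le> norm (\<Sum>i<m. (real m * \<bar>y i\<bar>) ^ j * \<bar>w i\<bar> ^ j)"
    proof (intro AE_I2)
      fix w
      have "\<bar>vdot m w y\<bar> ^ j \<le> (\<Sum>i<m. \<bar>w i * y i\<bar>) ^ j"
        unfolding vdot_def by (intro power_mono sum_abs) auto
      also have "\<dots> \<le> (\<Sum>i<m. (real (card {..<m}) * \<bar>w i * y i\<bar>) ^ j)"
        using False by (intro sum_pow_le_card) auto
      also have "\<dots> = (\<Sum>i<m. (real m * \<bar>y i\<bar>) ^ j * \<bar>w i\<bar> ^ j)"
        by (simp add: abs_mult power_mult_distrib mult_ac)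
      finally show "norm (\<bar>vdot m w y\<bar> ^ j) \<le> norm (\<Sum>i<m. (real m * \<bar>y i\<bar>) ^ j * \<bar>w i\<bar> ^ j)"
        by (simp add: sum_nonneg)
    qed
  qed
qed

lemma int_vdot_pow: "integrable (P m) (\<lambda>w. (vdot m w y) ^ j)"
proof -
  have "integrable (P m) (\<lambda>w. \<bar>(vdot m w y) ^ j\<bar>)" using int_vdot_abs_pow by (simp add: power_abs)
  moreover have "(\<lambda>w. (vdot m w y) ^ j) \<in> borel_measurable (P m)" by measurable
  ultimately show ?thesis using integrable_abs_iff by blast
qed

lemma vdot_upd: "vdot (Suc m) (x(m := t)) y = vdot m x y + t * y m"
  unfolding vdot_def by (auto intro!: sum.cong)

lemma E_step:
  "(\<integral>w. (vdot (Suc m) w y) ^ n \<partial>P (Suc m)) =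
   (\<Sum>k\<le>n. real (n choose k) * (y m) ^ k * (\<integral>t. t ^ k \<partial>\<mu>) * (\<integral>w. (vdot m w y) ^ (n - k) \<partial>P m))"
proof -
  interpret mu: prob_space \<mu> by (rule prob)
  interpret PS: product_sigma_finite "\<lambda>_::nat. \<mu>"
    by (simp add: product_sigma_finite_def mu.sigma_finite_measure_axioms)
  have ins: "{..<Suc m} = insert m {..<m}" by auto
  have "(\<integral>w. (vdot (Suc m) w y) ^ n \<partial>P (Suc m)) =
     (\<integral>x. (\<integral>t. (vdot (Suc m) (x(m := t)) y) ^ n \<partial>\<mu>) \<partial>P m)"
    unfolding P_def ins using int_vdot_pow[of "Suc m" y n]
    by (intro PS.product_integral_insert) (auto simp: P_def ins)
  also have "\<dots> = (\<integral>x. (\<Sum>k\<le>n. (real (n choose k) * (y m) ^ k * (\<integral>t. t ^ k \<partial>\<mu>)) * (vdot m x y) ^ (n - k)) \<partial>P m)"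
  proof (rule Bochner_Integration.integral_cong[OF refl])
    fix x
    have "(\<integral>t. (vdot (Suc m) (x(m := t)) y) ^ n \<partial>\<mu>) =
        (\<integral>t. (\<Sum>k\<le>n. (real (n choose k) * (y m) ^ k * (vdot m x y) ^ (n - k)) * t ^ k) \<partial>\<mu>)"
      unfolding vdot_upd add.commute[of "vdot m x y"] binomial_ring
      by (intro Bochner_Integration.integral_cong refl sum.cong) (auto simp: power_mult_distrib mult_ac)
    also have "\<dots> = (\<Sum>k\<le>n. (real (n choose k) * (y m) ^ k * (vdot m x y) ^ (n - k)) * (\<integral>t. t ^ k \<partial>\<mu>))"
      by (simp add: integral_sum integrable_mult_right int_mu_pow)
    finally show "(\<integral>t. (vdot (Suc m) (x(m := t)) y) ^ n \<partial>\<mu>) = (\<Sum>k\<le>n. (real (n choose k) * (y m) ^ k * (\<integral>t. t ^ k \<partial>\<mu>)) * (vdot m x y) ^ (n - k))"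
      by (simp add: mult_ac)
  qed
  also have "\<dots> = (\<Sum>k\<le>n. real (n choose k) * (y m) ^ k * (\<integral>t. t ^ k \<partial>\<mu>) * (\<integral>w. (vdot m w y) ^ (n - k) \<partial>P m))"
    by (simp add: integral_sum integrable_mult_right int_vdot_pow)
  finally show ?thesis .
qed

end



lemma binom_lower:
  fixes a b :: real
  assumes "0 \<le> a" "0 \<le> b" "r \<ge> 1"
  shows "a ^ r + b ^ r \<le> (a + b) ^ r" "a ^ r + a ^ (r - 1) * b \<le> (a + b) ^ r"
proof -
  have bin: "(a + b) ^ r = (\<Sum>k\<le>r. real (r choose k) * b ^ k * a ^ (r - k))"
    by (subst add.commute) (rule binomial_ring)
  have nn: "\<And>k. 0 \<le> real (r choose k) * b ^ k * a ^ (r - k)" using assms by simp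
  have "(\<Sum>k\<in>{0, r}. real (r choose k) * b ^ k * a ^ (r - k)) \<le> (\<Sum>k\<le>r. real (r choose k) * b ^ k * a ^ (r - k))"
    by (intro sum_mono2 nn) auto
  then show "a ^ r + b ^ r \<le> (a + b) ^ r" using assms unfolding bin by simp
  have "(\<Sum>k\<in>{0, 1}. real (r choose k) * b ^ k * a ^ (r - k)) \<le> (\<Sum>k\<le>r. real (r choose k) * b ^ k * a ^ (r - k))"
    using assms by (intro sum_mono2 nn) auto
  moreover have "1 * a ^ (r - 1) \<le> real r * a ^ (r - 1)"
    using assms by (intro mult_right_mono) auto
  then have "a ^ (r - 1) * b \<le> real r * b * a ^ (r - 1)"
    using assms by (metis mult.commute mult.left_commute mult_1 mult_left_mono)
  ultimately show "a ^ r + a ^ (r - 1) * b \<le> (a + b) ^ r" using assms unfolding bin by simp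
qed

lemma mixed_le_max:
  fixes s t :: real
  assumes "0 \<le> s" "0 \<le> t" "2 \<le> k" "k \<le> 2 * r"
  shows "t ^ k * s ^ (2 * r - k) \<le> max (s ^ (2 * r - 2) * t ^ 2) (t ^ (2 * r))"
proof (cases "t \<le> s")
  case True
  have "t ^ k = t ^ 2 * t ^ (k - 2)" using assms by (metis le_add_diff_inverse power_add)
  then have "t ^ k * s ^ (2 * r - k) = t ^ 2 * (t ^ (k - 2) * s ^ (2 * r - k))"
    by simp
  also have "\<dots> \<le> t ^ 2 * (s ^ (k - 2) * s ^ (2 * r - k))"
    using assms True by (intro mult_left_mono mult_right_mono power_mono) auto
  also have "(k - 2) + (2 * r - k) = 2 * r - 2" using assms by arith
  then have "t ^ 2 * (s ^ (k - 2) * s ^ (2 * r - k)) = s ^ (2 * r - 2) * t ^ 2"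
    by (simp add: power_add[symmetric])
  finally show ?thesis by simp
next
  case False
  have "t ^ k * s ^ (2 * r - k) \<le> t ^ k * t ^ (2 * r - k)"
    using assms False by (intro mult_left_mono power_mono) auto
  also have "\<dots> = t ^ (2 * r)"
    using assms by (simp add: power_add[symmetric])
  finally show ?thesis by simp
qed

context momsetup begin

definition "Mabs k = (\<integral>x. \<bar>x\<bar> ^ k \<partial>\<mu>)"
definition "Qc r = (\<Sum>k\<le>2*r. (if k < 2 then 0 else 2 * real (2 * r choose k) * Mabs k))"
definition "Lc r = 1 + Qc r"

lemma Mabs_nn: "0 \<le> Mabs k" unfolding Mabs_def by simp

lemma Qc_nn: "0 \<le> Qc r" unfolding Qc_def by (intro sum_nonneg) (auto simp: Mabs_nn)

lemma vnorm_nn: "0 \<le> vnorm m y" unfolding vnorm_def by (simp add: sum_nonneg)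

lemma vnorm_zero: "vnorm m y = 0 \<Longrightarrow> vdot m w y = 0"
proof -
  assume "vnorm m y = 0"
  then have "(\<Sum>i<m. (y i)\<^sup>2) = 0" unfolding vnorm_def by simp
  then have "\<forall>i\<in>{..<m}. (y i)\<^sup>2 = 0" by (subst (asm) sum_nonneg_eq_0_iff) auto
  then show ?thesis unfolding vdot_def by simp
qed

lemma lyap:
  assumes L: "1 \<le> L" and A: "(\<integral>w. (vdot m w y) ^ (2 * r) \<partial>P m) \<le> (L * vnorm m y) ^ (2 * r)"
    and j: "j \<le> 2 * r"
  shows "(\<integral>w. \<bar>vdot m w y\<bar> ^ j \<partial>P m) \<le> 2 * (L * vnorm m y) ^ j"
proof (cases "vnorm m y = 0")
  case True
  interpret prob_space "P m" by (rule prob_P)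
  show ?thesis using True vnorm_zero[OF True] by (cases j) (simp_all add: prob_space)
next
  case False
  define c where "c = L * vnorm m y"
  have c: "0 < c" using False L vnorm_nn[of m y] unfolding c_def
    by (metis dual_order.order_iff_strict mult_pos_pos zero_less_one order_less_le_trans)
  have pw: "\<bar>v\<bar> ^ j \<le> c ^ j + v ^ (2 * r) / c ^ (2 * r - j)" for v :: real
  proof (cases "\<bar>v\<bar> \<le> c")
    case True
    then have "\<bar>v\<bar> ^ j \<le> c ^ j" by (intro power_mono) auto
    moreover have "0 \<le> v ^ (2 * r) / c ^ (2 * r - j)" using c by (simp add: zero_le_even_power)
    ultimately show ?thesis by simp
  next
    case False
    have "\<bar>v\<bar> ^ j * c ^ (2 * r - j) \<le> \<bar>v\<bar> ^ j * \<bar>v\<bar> ^ (2 * r - j)"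
      using False c by (intro mult_left_mono power_mono) auto
    also have "\<dots> = v ^ (2 * r)" using j by (simp add: power_add[symmetric] power_even_abs)
    finally have "\<bar>v\<bar> ^ j \<le> v ^ (2 * r) / c ^ (2 * r - j)" using c by (simp add: field_simps)
    moreover have "0 \<le> c ^ j" using c by simp
    ultimately show ?thesis by linarith
  qed
  interpret prob_space "P m" by (rule prob_P)
  have "(\<integral>w. \<bar>vdot m w y\<bar> ^ j \<partial>P m) \<le> (\<integral>w. c ^ j + (vdot m w y) ^ (2 * r) / c ^ (2 * r - j) \<partial>P m)"
    by (intro integral_mono pw int_vdot_abs_pow Bochner_Integration.integrable_add
         integrable_const Bochner_Integration.integrable_divide int_vdot_pow)
  also have "\<dots> = c ^ j + (\<integral>w. (vdot m w y) ^ (2 * r) \<partial>P m) / c ^ (2 * r - j)"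
    by (simp add: int_vdot_pow prob_space)
  also have "\<dots> \<le> c ^ j + c ^ (2 * r) / c ^ (2 * r - j)"
    using A c unfolding c_def[symmetric] by (intro add_left_mono divide_right_mono) auto
  also have "c ^ (2 * r) = c ^ j * c ^ (2 * r - j)" using j by (simp add: power_add[symmetric])
  also have "c ^ j + c ^ j * c ^ (2 * r - j) / c ^ (2 * r - j) = 2 * c ^ j" using c by simp
  finally show ?thesis unfolding c_def .
qed

end



context momsetup begin

lemma vnorm_Suc_sq: "(vnorm (Suc m) y)\<^sup>2 = (vnorm m y)\<^sup>2 + (y m)\<^sup>2"
  unfolding vnorm_def by (simp add: sum_nonneg)

lemma mom_bound:
  assumes r: "1 \<le> r"
  shows "(\<integral>w. (vdot m w y) ^ (2 * r) \<partial>P m) \<le> (Lc r * vnorm m y) ^ (2 * r)"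
proof (induction m)
  case 0
  interpret prob_space "P 0" by (rule prob_P)
  show ?case using r by (simp add: vdot_def vnorm_def prob_space)
next
  case (Suc m)
  define L where "L = Lc r"
  define s where "s = vnorm m y"
  define t where "t = \<bar>y m\<bar>"
  define Mx where "Mx = max (s ^ (2 * r - 2) * t ^ 2) (t ^ (2 * r))"
  have L1: "1 \<le> L" unfolding L_def Lc_def using Qc_nn by simp
  have s0: "0 \<le> s" unfolding s_def by (rule vnorm_nn)
  have t0: "0 \<le> t" unfolding t_def by simp
  have Mx0: "0 \<le> Mx" unfolding Mx_def using t0 s0 by (simp add: le_max_iff_disj)
  have IH: "(\<integral>w. (vdot m w y) ^ (2 * r) \<partial>P m) \<le> (L * s) ^ (2 * r)"
    using Suc unfolding L_def s_def .
  interpret mu: prob_space \<mu> by (rule prob)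
  define g where "g k = (if k = 0 then (L * s) ^ (2 * r) else 0) +
      (if k < 2 then 0 else 2 * real (2 * r choose k) * Mabs k) * (L ^ (2 * r - 2) * Mx)" for k
  have term_le: "real (2 * r choose k) * (y m) ^ k * (\<integral>t. t ^ k \<partial>\<mu>) * (\<integral>w. (vdot m w y) ^ (2 * r - k) \<partial>P m) \<le> g k"
    if k: "k \<le> 2 * r" for k
  proof -
    consider "k = 0" | "k = 1" | "2 \<le> k" by linarith
    then show ?thesis
    proof cases
      case 1
      then show ?thesis using IH by (simp add: g_def mu.prob_space)
    next
      case 2
      then show ?thesis using mean0 by (simp add: g_def)
    next
      case 3
      let ?a = "real (2 * r choose k)"
      have "real (2 * r choose k) * (y m) ^ k * (\<integral>t. t ^ k \<partial>\<mu>) * (\<integral>w. (vdot m w y) ^ (2 * r - k) \<partial>P m)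
          \<le> \<bar>real (2 * r choose k) * (y m) ^ k * (\<integral>t. t ^ k \<partial>\<mu>) * (\<integral>w. (vdot m w y) ^ (2 * r - k) \<partial>P m)\<bar>"
        by simp
      also have "\<dots> = ?a * t ^ k * \<bar>\<integral>t. t ^ k \<partial>\<mu>\<bar> * \<bar>\<integral>w. (vdot m w y) ^ (2 * r - k) \<partial>P m\<bar>"
        by (simp add: abs_mult t_def power_abs)
      also have "\<dots> \<le> ?a * t ^ k * Mabs k * (2 * (L * s) ^ (2 * r - k))"
      proof (intro mult_mono mult_nonneg_nonneg)
        show "\<bar>\<integral>t. t ^ k \<partial>\<mu>\<bar> \<le> Mabs k" unfolding Mabs_def
          by (rule order_trans[OF integral_abs_bound]) (simp add: power_abs)
        have "\<bar>\<integral>w. (vdot m w y) ^ (2 * r - k) \<partial>P m\<bar> \<le> (\<integral>w. \<bar>vdot m w y\<bar> ^ (2 * r - k) \<partial>P m)"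
          by (rule order_trans[OF integral_abs_bound]) (simp add: power_abs)
        also have "\<dots> \<le> 2 * (L * s) ^ (2 * r - k)"
          unfolding s_def by (rule lyap[OF L1]) (use IH s_def in auto)
        finally show "\<bar>\<integral>w. (vdot m w y) ^ (2 * r - k) \<partial>P m\<bar> \<le> 2 * (L * s) ^ (2 * r - k)" .
      qed (auto simp: t0 Mabs_nn)
      also have "\<dots> = 2 * ?a * Mabs k * (L ^ (2 * r - k) * (t ^ k * s ^ (2 * r - k)))"
        by (simp add: power_mult_distrib mult_ac)
      also have "\<dots> \<le> 2 * ?a * Mabs k * (L ^ (2 * r - 2) * Mx)"
      proof (intro mult_left_mono mult_mono)
        show "L ^ (2 * r - k) \<le> L ^ (2 * r - 2)" using L1 3 by (intro power_increasing) auto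
        show "t ^ k * s ^ (2 * r - k) \<le> Mx" unfolding Mx_def using s0 t0 3 k by (rule mixed_le_max)
      qed (use L1 Mx0 Mabs_nn s0 t0 in auto)
      also have "\<dots> = g k" using 3 by (simp add: g_def)
      finally show ?thesis .
    qed
  qed
  have "(\<integral>w. (vdot (Suc m) w y) ^ (2 * r) \<partial>P (Suc m)) \<le> (\<Sum>k\<le>2 * r. g k)"
    unfolding E_step by (intro sum_mono term_le) auto
  also have "\<dots> = (L * s) ^ (2 * r) + Qc r * (L ^ (2 * r - 2) * Mx)"
    unfolding g_def sum.distrib Qc_def sum_distrib_right by simp
  also have "\<dots> \<le> (L * s) ^ (2 * r) + L ^ (2 * r) * Mx"
  proof -
    have "Qc r * L ^ (2 * r - 2) \<le> L ^ 2 * L ^ (2 * r - 2)"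
    proof (intro mult_right_mono)
      have "Qc r \<le> L" unfolding L_def Lc_def by simp
      also have "L \<le> L ^ 2" using L1 by (simp add: power2_eq_square)
      finally show "Qc r \<le> L ^ 2" .
    qed (use L1 in simp)
    also have "\<dots> = L ^ (2 * r)"
    proof -
      have e: "2 + (2 * r - 2) = 2 * r" using r by simp
      show ?thesis by (metis e power_add)
    qed
    finally show ?thesis using Mx0 by (simp add: mult.assoc[symmetric] mult_right_mono)
  qed
  also have "\<dots> = L ^ (2 * r) * (s ^ (2 * r) + Mx)" by (simp add: power_mult_distrib algebra_simps)
  also have "s ^ (2 * r) + Mx \<le> (s\<^sup>2 + t\<^sup>2) ^ r"
  proof -
    have a: "(s\<^sup>2) ^ r + (t\<^sup>2) ^ r \<le> (s\<^sup>2 + t\<^sup>2) ^ r" "(s\<^sup>2) ^ r + (s\<^sup>2) ^ (r - 1) * t\<^sup>2 \<le> (s\<^sup>2 + t\<^sup>2) ^ r"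
      using binom_lower[of "s\<^sup>2" "t\<^sup>2" r] r by auto
    have b: "(s\<^sup>2) ^ (r - 1) = s ^ (2 * r - 2)" "(s\<^sup>2) ^ r = s ^ (2 * r)" "(t\<^sup>2) ^ r = t ^ (2 * r)"
      using r by (simp_all add: power_mult[symmetric] mult.commute right_diff_distrib')
    show ?thesis using a unfolding b Mx_def by (simp add: mult.commute)
  qed
  then have "L ^ (2 * r) * (s ^ (2 * r) + Mx) \<le> L ^ (2 * r) * (s\<^sup>2 + t\<^sup>2) ^ r"
    using L1 by (intro mult_left_mono) auto
  also have "(s\<^sup>2 + t\<^sup>2) = (vnorm (Suc m) y)\<^sup>2" unfolding vnorm_Suc_sq s_def t_def by simp
  also have "L ^ (2 * r) * ((vnorm (Suc m) y)\<^sup>2) ^ r = (Lc r * vnorm (Suc m) y) ^ (2 * r)"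
    unfolding L_def by (simp add: power_mult[symmetric] power_mult_distrib mult.commute)
  finally show ?case .
qed

end



lemma grid_net:
  fixes T :: "'a::euclidean_space set" and R \<delta> :: real
  assumes TR: "T \<subseteq> cball 0 R" and R: "0 \<le> R" and d: "0 < \<delta>"
  shows "\<exists>N. finite N \<and> N \<subseteq> T \<and> real (card N) \<le> (2 * R / \<delta> + 4) ^ DIM('a) \<and>
              (\<forall>x\<in>T. \<exists>a\<in>N. dist x a \<le> 2 * real DIM('a) * \<delta>)"
proof -
  define M :: int where "M = \<lceil>R / \<delta>\<rceil>"
  define J where "J = {-M-1..M}"
  define gp where "gp j = (\<Sum>b\<in>Basis. (\<delta> * of_int (j b)) *\<^sub>R b)" for j :: "'a \<Rightarrow> int"
  define G where "G = gp ` (PiE Basis (\<lambda>_. J))"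
  have finG: "finite G" unfolding G_def J_def by (intro finite_imageI finite_PiE) auto
  have cardG: "card G \<le> card J ^ DIM('a)"
  proof -
    have "card G \<le> card (PiE (Basis::'a set) (\<lambda>_. J))" unfolding G_def by (rule card_image_le) (auto simp: J_def intro!: finite_PiE)
    also have "\<dots> = card J ^ DIM('a)" by (simp add: card_PiE)
    finally show ?thesis .
  qed
  have "0 \<le> R / \<delta>" using R d by simp
  then have M0: "0 \<le> M" unfolding M_def by simp
  have cardJ: "real (card J) \<le> 2 * R / \<delta> + 4"
  proof -
    have "card J = nat (2 * M + 2)" unfolding J_def by simp
    then have "real (card J) = 2 * real_of_int M + 2" using M0 by simp
    moreover have "real_of_int M \<le> R / \<delta> + 1" unfolding M_def by linarith
    ultimately show ?thesis by simp
  qed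
  have inner_gp: "gp j \<bullet> b = \<delta> * of_int (j b)" if "b \<in> Basis" for j b
    unfolding gp_def using that by (simp add: inner_sum_left inner_Basis if_distrib sum.delta cong: if_cong)
  define DD where "DD = real DIM('a) * \<delta>"
  have close: "\<exists>g\<in>G. dist x g \<le> DD" if x: "x \<in> T" for x
  proof -
    define j where "j = (\<lambda>b\<in>Basis. \<lfloor>(x \<bullet> b) / \<delta>\<rfloor>)"
    have nx: "norm x \<le> R" using x TR by auto
    have jJ: "j \<in> PiE (Basis::'a set) (\<lambda>_. J)"
    proof -
      have "\<lfloor>(x \<bullet> b) / \<delta>\<rfloor> \<in> J" if b: "b \<in> Basis" for b
      proof -
        have "\<bar>x \<bullet> b\<bar> \<le> R" using Basis_le_norm[OF b, of x] nx by simp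
        then have "\<bar>(x \<bullet> b) / \<delta>\<bar> \<le> R / \<delta>" using d by (simp add: abs_div divide_right_mono)
        moreover have "R / \<delta> \<le> real_of_int M" unfolding M_def by simp
        ultimately show ?thesis unfolding J_def by (simp, linarith)
      qed
      then show ?thesis unfolding j_def by auto
    qed
    have "dist x (gp j) = norm (x - gp j)" by (simp add: dist_norm)
    also have "\<dots> \<le> (\<Sum>b\<in>Basis. \<bar>(x - gp j) \<bullet> b\<bar>)" by (rule norm_le_l1)
    also have "\<dots> \<le> (\<Sum>b\<in>(Basis::'a set). \<delta>)"
    proof (intro sum_mono)
      fix b :: 'a assume b: "b \<in> Basis"
      have "(x - gp j) \<bullet> b = x \<bullet> b - \<delta> * \<lfloor>(x \<bullet> b) / \<delta>\<rfloor>"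
        using b by (simp add: inner_diff_left inner_gp j_def)
      moreover have "\<delta> * \<lfloor>(x \<bullet> b) / \<delta>\<rfloor> \<le> x \<bullet> b" "x \<bullet> b < \<delta> * \<lfloor>(x \<bullet> b) / \<delta>\<rfloor> + \<delta>"
      proof -
        have f1: "real_of_int \<lfloor>(x \<bullet> b) / \<delta>\<rfloor> \<le> (x \<bullet> b) / \<delta>" by linarith
        have f2: "(x \<bullet> b) / \<delta> < real_of_int \<lfloor>(x \<bullet> b) / \<delta>\<rfloor> + 1" by linarith
        show "\<delta> * \<lfloor>(x \<bullet> b) / \<delta>\<rfloor> \<le> x \<bullet> b" using mult_left_mono[OF f1, of \<delta>] d by simp
        show "x \<bullet> b < \<delta> * \<lfloor>(x \<bullet> b) / \<delta>\<rfloor> + \<delta>" using mult_strict_left_mono[OF f2 d] d by (simp add: distrib_left)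
      qed
      ultimately show "\<bar>(x - gp j) \<bullet> b\<bar> \<le> \<delta>" by simp
    qed
    also have "\<dots> = DD" unfolding DD_def by simp
    finally show ?thesis using jJ unfolding G_def by auto
  qed
  define G0 where "G0 = {g\<in>G. \<exists>a\<in>T. dist a g \<le> DD}"
  define sel where "sel g = (SOME a. a \<in> T \<and> dist a g \<le> DD)" for g
  have sel: "sel g \<in> T \<and> dist (sel g) g \<le> DD" if "g \<in> G0" for g
  proof -
    from that obtain a where "a \<in> T \<and> dist a g \<le> DD" unfolding G0_def by auto
    then show ?thesis unfolding sel_def by (rule someI)
  qed
  define N where "N = sel ` G0"
  have finG0: "finite G0" using finG unfolding G0_def by auto
  show ?thesis
  proof (intro exI conjI ballI)
    show "finite N" unfolding N_def using finG0 by auto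
    show "N \<subseteq> T" unfolding N_def using sel by auto
    have "card N \<le> card G0" unfolding N_def using finG0 by (rule card_image_le)
    also have "\<dots> \<le> card G" using finG unfolding G0_def by (intro card_mono) auto
    also have "\<dots> \<le> card J ^ DIM('a)" by (rule cardG)
    finally have "real (card N) \<le> real (card J) ^ DIM('a)" by (metis of_nat_le_iff of_nat_power)
    also have "\<dots> \<le> (2 * R / \<delta> + 4) ^ DIM('a)" using cardJ by (intro power_mono) auto
    finally show "real (card N) \<le> (2 * R / \<delta> + 4) ^ DIM('a)" .
    fix x assume x: "x \<in> T"
    obtain g where g: "g \<in> G" "dist x g \<le> DD" using close[OF x] by auto
    then have gG0: "g \<in> G0" using x unfolding G0_def by auto
    have "dist x (sel g) \<le> dist x g + dist (sel g) g" by (metis dist_commute dist_triangle)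
    also have "\<dots> \<le> 2 * real DIM('a) * \<delta>" using g sel[OF gG0] unfolding DD_def by simp
    finally show "\<exists>a\<in>N. dist x a \<le> 2 * real DIM('a) * \<delta>" using gG0 unfolding N_def by auto
  qed
qed




lemma vdot_cs: "\<bar>vdot m w z\<bar> \<le> vnorm m w * vnorm m z"
proof -
  have "(vdot m w z)\<^sup>2 \<le> (\<Sum>i<m. (w i)\<^sup>2) * (\<Sum>i<m. (z i)\<^sup>2)"
    unfolding vdot_def by (rule Cauchy_Schwarz_ineq_sum)
  then have "sqrt ((vdot m w z)\<^sup>2) \<le> sqrt ((\<Sum>i<m. (w i)\<^sup>2) * (\<Sum>i<m. (z i)\<^sup>2))"
    by (rule real_sqrt_le_mono)
  then show ?thesis unfolding vnorm_def by (simp add: real_sqrt_mult)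
qed

lemma vdot_diff: "vdot m w (\<lambda>i. y i - z i) = vdot m w y - vdot m w z"
  unfolding vdot_def by (simp add: right_diff_distrib sum_subtractf)

lemma half_geom: "(\<Sum>k<n. (1/2::real) ^ (k + 1)) \<le> 1"
proof -
  have "(\<Sum>k<n. (1/2::real) ^ (k + 1)) = 1 - (1/2) ^ n"
    by (induction n) (simp_all add: field_simps)
  then show ?thesis by simp
qed

lemma wsum:
  fixes a :: "nat \<Rightarrow> real"
  assumes a: "\<And>k. 0 \<le> a k" and q: "1 \<le> q"
  shows "(\<Sum>k<n. a k) ^ q \<le> (\<Sum>k<n. (2 ^ (k + 1) * a k) ^ q)"
proof (cases "n = 0")
  case True
  then show ?thesis using q by (cases q) auto
next
  case False
  define b where "b k = 2 ^ (k + 1) * a k" for k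
  have "Max (b ` {..<n}) \<in> b ` {..<n}" using False by (intro Max_in) auto
  then obtain k0 where k0: "k0 < n" "b k0 = Max (b ` {..<n})" by auto
  have bk: "b k \<le> b k0" if "k < n" for k using that k0 by auto
  have b0: "0 \<le> b k" for k unfolding b_def using a by simp
  have "(\<Sum>k<n. a k) = (\<Sum>k<n. (1/2) ^ (k + 1) * b k)"
    unfolding b_def by (intro sum.cong) (auto simp: power_one_over field_simps)
  also have "\<dots> \<le> (\<Sum>k<n. (1/2) ^ (k + 1) * b k0)"
    by (intro sum_mono mult_left_mono bk) auto
  also have "\<dots> = (\<Sum>k<n. (1/2::real) ^ (k + 1)) * b k0" by (simp add: sum_distrib_right)
  also have "\<dots> \<le> 1 * b k0" using half_geom b0 by (intro mult_right_mono) auto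
  finally have "(\<Sum>k<n. a k) ^ q \<le> (b k0) ^ q" using a by (intro power_mono) (auto intro: sum_nonneg)
  also have "\<dots> \<le> (\<Sum>k<n. (b k) ^ q)" using k0 b0 by (intro member_le_sum) auto
  finally show ?thesis unfolding b_def .
qed

lemma chain_pointwise:
  fixes T0 :: "'a::metric_space set" and f :: "'a \<Rightarrow> nat \<Rightarrow> real" and N :: "nat \<Rightarrow> 'a set"
  assumes N: "\<And>k. finite (N k)" "\<And>k. N k \<subseteq> T0" "\<And>k x. x \<in> T0 \<Longrightarrow> \<exists>a\<in>N k. dist x a \<le> (1/4) ^ k"
    and Lip: "\<And>x y. x \<in> T0 \<Longrightarrow> y \<in> T0 \<Longrightarrow> vnorm m (\<lambda>i. f x i - f y i) \<le> Lam * dist x y"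
    and Lam: "0 \<le> Lam"
    and x: "x \<in> T0" and r: "1 \<le> r"
  shows "ennreal ((vdot m w (f x)) ^ (2 * r)) \<le>
     (\<Sum>k. ennreal (2 ^ ((k + 1) * (2 * r)) *
        (case k of 0 \<Rightarrow> (\<Sum>a\<in>N 0. (vdot m w (f a)) ^ (2 * r))
         | Suc j \<Rightarrow> (\<Sum>ab\<in>{ab \<in> N j \<times> N (Suc j). dist (fst ab) (snd ab) \<le> 2 * (1/4) ^ j}.
                      (vdot m w (f (fst ab)) - vdot m w (f (snd ab))) ^ (2 * r)))))"
    (is "_ \<le> (\<Sum>k. ennreal (2 ^ ((k + 1) * (2 * r)) * ?B k))")
proof -
  define X where "X a = vdot m w (f a)" for a
  define q where "q = 2 * r"
  define \<pi> where "\<pi> k = (SOME a. a \<in> N k \<and> dist x a \<le> (1/4) ^ k)" for k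
  have \<pi>: "\<pi> k \<in> N k \<and> dist x (\<pi> k) \<le> (1/4) ^ k" for k
  proof -
    obtain a where "a \<in> N k \<and> dist x a \<le> (1/4) ^ k" using N(3)[OF x, of k] by auto
    then show ?thesis unfolding \<pi>_def by (rule someI)
  qed
  have \<pi>T: "\<pi> k \<in> T0" for k using \<pi> N(2) by blast
  have Bnn: "0 \<le> ?B k" for k
    by (cases k) (auto intro!: sum_nonneg simp: zero_le_even_power)
  define A where "A k = (case k of 0 \<Rightarrow> \<bar>X (\<pi> 0)\<bar> | Suc j \<Rightarrow> \<bar>X (\<pi> (Suc j)) - X (\<pi> j)\<bar>)" for k
  have A0: "0 \<le> A k" for k unfolding A_def by (cases k) auto
  have AB: "(A k) ^ q \<le> ?B k" for k
  proof (cases k)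
    case 0
    have "(A k) ^ q = (X (\<pi> 0)) ^ q" using 0 unfolding A_def q_def by (simp add: power_even_abs)
    also have "\<dots> \<le> (\<Sum>a\<in>N 0. (X a) ^ q)"
      using \<pi>[of 0] N(1) unfolding q_def by (intro member_le_sum) (auto simp: zero_le_even_power)
    finally show ?thesis using 0 unfolding X_def q_def by simp
  next
    case (Suc j)
    have inP: "(\<pi> j, \<pi> (Suc j)) \<in> {ab \<in> N j \<times> N (Suc j). dist (fst ab) (snd ab) \<le> 2 * (1/4) ^ j}"
    proof -
      have "dist (\<pi> j) (\<pi> (Suc j)) \<le> dist x (\<pi> j) + dist x (\<pi> (Suc j))" by (metis dist_commute dist_triangle)
      also have "\<dots> \<le> (1/4) ^ j + (1/4) ^ Suc j" using \<pi>[of j] \<pi>[of "Suc j"] by (intro add_mono) auto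
      also have "\<dots> \<le> 2 * (1/4) ^ j" by simp
      finally show ?thesis using \<pi> by auto
    qed
    have "(A k) ^ q = (X (\<pi> j) - X (\<pi> (Suc j))) ^ q" using Suc unfolding A_def q_def
      by (simp add: power_even_abs abs_minus_commute)
    also have "\<dots> \<le> (\<Sum>ab\<in>{ab \<in> N j \<times> N (Suc j). dist (fst ab) (snd ab) \<le> 2 * (1/4) ^ j}. (X (fst ab) - X (snd ab)) ^ q)"
      using inP N(1) unfolding q_def
      by (intro member_le_sum[where f = "\<lambda>ab. (X (fst ab) - X (snd ab)) ^ (2 * r)", of "(\<pi> j, \<pi> (Suc j))", simplified])
         (auto simp: zero_le_even_power)
    finally show ?thesis using Suc unfolding X_def q_def by simp
  qed
  have bound_n: "ennreal ((X (\<pi> n)) ^ q) \<le> (\<Sum>k. ennreal (2 ^ ((k + 1) * q) * ?B k))" for n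
  proof -
    have tel: "X (\<pi> n) = X (\<pi> 0) + (\<Sum>k<n. X (\<pi> (Suc k)) - X (\<pi> k))"
      using sum_lessThan_telescope[of "\<lambda>k. X (\<pi> k)" n] by simp
    have "\<bar>X (\<pi> n)\<bar> \<le> \<bar>X (\<pi> 0)\<bar> + (\<Sum>k<n. \<bar>X (\<pi> (Suc k)) - X (\<pi> k)\<bar>)"
      unfolding tel by (rule order_trans[OF abs_triangle_ineq add_left_mono[OF sum_abs]])
    also have "\<dots> = (\<Sum>k<Suc n. A k)" unfolding sum.lessThan_Suc_shift A_def by simp
    finally have "\<bar>X (\<pi> n)\<bar> \<le> (\<Sum>k<Suc n. A k)" .
    then have "\<bar>X (\<pi> n)\<bar> ^ q \<le> (\<Sum>k<Suc n. A k) ^ q" by (rule power_mono) simp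
    moreover have "(X (\<pi> n)) ^ q = \<bar>X (\<pi> n)\<bar> ^ q" unfolding q_def by (simp add: power_even_abs)
    ultimately have "(X (\<pi> n)) ^ q \<le> (\<Sum>k<Suc n. A k) ^ q" by simp
    also have "\<dots> \<le> (\<Sum>k<Suc n. (2 ^ (k + 1) * A k) ^ q)" using A0 unfolding q_def
      by (rule wsum) (use q_def r in simp)
    also have "\<dots> \<le> (\<Sum>k<Suc n. 2 ^ ((k + 1) * q) * ?B k)"
    proof (intro sum_mono)
      fix k
      have "(2 ^ (k + 1) * A k) ^ q = 2 ^ ((k + 1) * q) * (A k) ^ q"
        by (simp only: power_mult_distrib power_mult[symmetric] mult.commute)
      also have "\<dots> \<le> 2 ^ ((k + 1) * q) * ?B k" using AB by (intro mult_left_mono) auto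
      finally show "(2 ^ (k + 1) * A k) ^ q \<le> 2 ^ ((k + 1) * q) * ?B k" .
    qed
    finally have "ennreal ((X (\<pi> n)) ^ q) \<le> ennreal (\<Sum>k<Suc n. 2 ^ ((k + 1) * q) * ?B k)"
      by (rule ennreal_leI)
    also have "\<dots> = (\<Sum>k<Suc n. ennreal (2 ^ ((k + 1) * q) * ?B k))"
      by (rule sum_ennreal[symmetric]) (use Bnn in simp)
    also have "\<dots> \<le> (\<Sum>k. ennreal (2 ^ ((k + 1) * q) * ?B k))"
      by (intro sum_le_suminf summableI) auto
    finally show ?thesis .
  qed
  define V where "V = vnorm m w"
  have V0: "0 \<le> V" unfolding V_def vnorm_def by (simp add: sum_nonneg)
  have "(\<lambda>n. X (\<pi> n) - X x) \<longlonglongrightarrow> 0"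
  proof (rule Lim_null_comparison)
    show "\<forall>\<^sub>F n in sequentially. norm (X (\<pi> n) - X x) \<le> V * Lam * (1/4) ^ n"
    proof (intro always_eventually allI)
      fix n
      have "norm (X (\<pi> n) - X x) = \<bar>vdot m w (\<lambda>i. f (\<pi> n) i - f x i)\<bar>"
        unfolding X_def vdot_diff by simp
      also have "\<dots> \<le> V * vnorm m (\<lambda>i. f (\<pi> n) i - f x i)" unfolding V_def by (rule vdot_cs)
      also have "\<dots> \<le> V * (Lam * dist (\<pi> n) x)" using Lip[OF \<pi>T x] V0 by (intro mult_left_mono) auto
      also have "\<dots> \<le> V * (Lam * (1/4) ^ n)" using \<pi>[of n] V0 Lam
        by (intro mult_left_mono) (auto simp: dist_commute)
      finally show "norm (X (\<pi> n) - X x) \<le> V * Lam * (1/4) ^ n" by (simp add: mult.assoc)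
    qed
    show "(\<lambda>n. V * Lam * (1/4::real) ^ n) \<longlonglongrightarrow> 0"
      by (intro tendsto_mult_right_zero LIMSEQ_power_zero) auto
  qed
  then have "(\<lambda>n. X (\<pi> n)) \<longlonglongrightarrow> X x" by (simp add: LIM_zero_iff)
  then have "(\<lambda>n. ennreal ((X (\<pi> n)) ^ q)) \<longlonglongrightarrow> ennreal ((X x) ^ q)"
    by (intro tendsto_ennrealI tendsto_power)
  then have "ennreal ((X x) ^ q) \<le> (\<Sum>k. ennreal (2 ^ ((k + 1) * q) * ?B k))"
    by (rule LIMSEQ_le_const2) (use bound_n in blast)
  then show ?thesis unfolding X_def q_def .
qed




lemma net_family:
  fixes T0 :: "'a::euclidean_space set"
  assumes "compact T0"
  shows "\<exists>N Cn. 0 \<le> Cn \<and> (\<forall>k. finite (N k) \<and> N k \<subseteq> T0 \<and>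
      real (card (N k)) \<le> Cn * 4 ^ (k * DIM('a)) \<and> (\<forall>x\<in>T0. \<exists>a\<in>N k. dist x a \<le> (1/4) ^ k))"
proof -
  obtain B where B: "0 < B" "\<And>x. x \<in> T0 \<Longrightarrow> norm x \<le> B"
    using compact_imp_bounded[OF assms] by (auto simp: bounded_pos)
  have TB: "T0 \<subseteq> cball 0 B" using B by auto
  define d where "d = real DIM('a)"
  have d1: "1 \<le> d" unfolding d_def by simp
  define Cn where "Cn = (4 * B * d + 4) ^ DIM('a)"
  have "\<forall>k. \<exists>N. finite N \<and> N \<subseteq> T0 \<and> real (card N) \<le> Cn * 4 ^ (k * DIM('a)) \<and> (\<forall>x\<in>T0. \<exists>a\<in>N. dist x a \<le> (1/4) ^ k)"
  proof
    fix k :: nat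
    define \<delta> where "\<delta> = (1/4) ^ k / (2 * d)"
    have \<delta>: "0 < \<delta>" unfolding \<delta>_def using d1 by simp
    obtain N where N: "finite N" "N \<subseteq> T0" "real (card N) \<le> (2 * B / \<delta> + 4) ^ DIM('a)"
      "\<forall>x\<in>T0. \<exists>a\<in>N. dist x a \<le> 2 * real DIM('a) * \<delta>"
      using grid_net[OF TB _ \<delta>] B(1) by auto
    have e1: "2 * real DIM('a) * \<delta> = (1/4) ^ k" unfolding \<delta>_def d_def by simp
    have e2: "2 * B / \<delta> = 4 * B * d * 4 ^ k" unfolding \<delta>_def using d1 by (simp add: field_simps power_one_over)
    have "(2 * B / \<delta> + 4) ^ DIM('a) \<le> ((4 * B * d + 4) * 4 ^ k) ^ DIM('a)"
    proof (intro power_mono)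
      have "(4::real) \<le> 4 * 4 ^ k" by simp
      then show "2 * B / \<delta> + 4 \<le> (4 * B * d + 4) * 4 ^ k" unfolding e2 by (simp add: distrib_right)
      show "0 \<le> 2 * B / \<delta> + 4" using B \<delta> by simp
    qed
    also have "\<dots> = Cn * 4 ^ (k * DIM('a))" unfolding Cn_def by (simp add: power_mult_distrib power_mult)
    finally show "\<exists>N. finite N \<and> N \<subseteq> T0 \<and> real (card N) \<le> Cn * 4 ^ (k * DIM('a)) \<and> (\<forall>x\<in>T0. \<exists>a\<in>N. dist x a \<le> (1/4) ^ k)"
      using N e1 by (intro exI[of _ N]) auto
  qed
  from choice[OF this] obtain N where "\<forall>k. finite (N k) \<and> N k \<subseteq> T0 \<and> real (card (N k)) \<le> Cn * 4 ^ (k * DIM('a)) \<and> (\<forall>x\<in>T0. \<exists>a\<in>N k. dist x a \<le> (1/4) ^ k)"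
    by blast
  moreover have "0 \<le> Cn" unfolding Cn_def using B d1 by simp
  ultimately show ?thesis by blast
qed

lemma pow2_frac:
  fixes a b c e :: nat
  assumes "a + e \<le> c + b"
  shows "(2::real) ^ a / 2 ^ b \<le> 2 ^ c / 2 ^ e"
proof -
  have "(2::real) ^ (a + e) \<le> 2 ^ (c + b)" using assms by (intro power_increasing) auto
  then have "(2::real) ^ a * 2 ^ e \<le> 2 ^ c * 2 ^ b" by (simp add: power_add)
  then show ?thesis by (simp add: divide_le_eq le_divide_eq mult_ac)
qed

lemma geo_aux:
  fixes j d q :: nat
  assumes q: "4 * d + 1 \<le> q"
  shows "(2::real) ^ ((j + 2) * q) * 4 ^ (j * d) * 4 ^ ((j + 1) * d) * ((1/4) ^ j) ^ q \<le> 2 ^ (2 * q) * 4 ^ d * (1/2) ^ j"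
proof -
  have e4: "(4::real) ^ n = 2 ^ (2 * n)" for n by (simp add: power_mult)
  have ex: "((j + 2) * q + 2 * (j * d) + 2 * ((j + 1) * d)) + j \<le> (2 * q + 2 * d) + 2 * (j * q)"
  proof -
    have "j * (4 * d + 1) \<le> j * q" using q by (rule mult_le_mono2)
    then show ?thesis by (simp add: algebra_simps)
  qed
  have l: "(2::real) ^ ((j + 2) * q) * 4 ^ (j * d) * 4 ^ ((j + 1) * d) * ((1/4) ^ j) ^ q =
      2 ^ ((j + 2) * q + 2 * (j * d) + 2 * ((j + 1) * d)) / 2 ^ (2 * (j * q))"
  proof -
    have "((1/4::real) ^ j) ^ q = 1 / 2 ^ (2 * (j * q))"
      by (simp add: power_one_over e4 power_mult[symmetric])
    then show ?thesis unfolding e4 by (simp add: power_add) (simp add: power_add[symmetric] algebra_simps)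
  qed
  have rr: "(2::real) ^ (2 * q) * 4 ^ d * (1/2) ^ j = 2 ^ (2 * q + 2 * d) / 2 ^ j"
    unfolding e4 by (simp add: power_add power_one_over)
  show ?thesis unfolding l rr by (rule pow2_frac[OF ex])
qed

lemma c01_bounds:
  fixes T0 :: "'a::euclidean_space set"
  assumes "c01_norm T0 m f \<le> ennreal lam"
  shows "\<And>x. x \<in> T0 \<Longrightarrow> vnorm m (f x) \<le> max lam 0"
    and "\<And>x y. x \<in> T0 \<Longrightarrow> y \<in> T0 \<Longrightarrow> vnorm m (\<lambda>i. f x i - f y i) \<le> max lam 0 * dist x y"
proof -
  have conv: "a \<le> max lam 0" if "ennreal a \<le> ennreal lam" "0 \<le> a" for a
    using that by (cases "0 \<le> lam") (auto simp: ennreal_neg)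
  let ?S1 = "(SUP x\<in>T0. ennreal (vnorm m (f x)))"
  let ?S2 = "(SUP xy\<in>{(x, y). x \<in> T0 \<and> y \<in> T0 \<and> x \<noteq> y}.
        ennreal (vnorm m (\<lambda>i. f (fst xy) i - f (snd xy) i) / norm (fst xy - snd xy)))"
  have S: "?S1 + ?S2 \<le> ennreal lam" using assms unfolding c01_norm_def .
  have S1: "?S1 \<le> ennreal lam" by (rule order_trans[OF add_increasing2[OF zero_le order_refl] S])
  have S2: "?S2 \<le> ennreal lam" by (rule order_trans[OF add_increasing[OF zero_le order_refl] S])
  have vn: "0 \<le> vnorm m z" for z unfolding vnorm_def by (simp add: sum_nonneg)
  fix x assume x: "x \<in> T0"
  have "ennreal (vnorm m (f x)) \<le> ?S1" using x by (intro SUP_upper)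
  then show "vnorm m (f x) \<le> max lam 0" using S1 vn by (intro conv) auto
  fix y assume y: "y \<in> T0"
  show "vnorm m (\<lambda>i. f x i - f y i) \<le> max lam 0 * dist x y"
  proof (cases "x = y")
    case True
    then show ?thesis unfolding vnorm_def by simp
  next
    case False
    have "ennreal (vnorm m (\<lambda>i. f x i - f y i) / norm (x - y)) \<le> ?S2"
      using x y False by (intro SUP_upper2[of "(x, y)"]) auto
    then have "vnorm m (\<lambda>i. f x i - f y i) / norm (x - y) \<le> max lam 0" using S2 vn by (intro conv) auto
    then show ?thesis using False by (simp add: dist_norm divide_le_eq)
  qed
qed

context momsetup begin

lemma sum_mom_bound:
  assumes S: "finite S" and c: "0 \<le> c" and r: "1 \<le> r" and Z: "\<And>s. s \<in> S \<Longrightarrow> vnorm m (z s) \<le> Z"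
  shows "(\<integral>\<^sup>+ w. ennreal (c * (\<Sum>s\<in>S. (vdot m w (z s)) ^ (2 * r))) \<partial>P m) \<le> ennreal (c * real (card S) * (Lc r * Z) ^ (2 * r))"
proof -
  have int: "integrable (P m) (\<lambda>w. c * (\<Sum>s\<in>S. (vdot m w (z s)) ^ (2 * r)))"
    by (intro Bochner_Integration.integrable_mult_right Bochner_Integration.integrable_sum int_vdot_pow)
  have nn: "0 \<le> c * (\<Sum>s\<in>S. (vdot m w (z s)) ^ (2 * r))" for w
    using c by (intro mult_nonneg_nonneg sum_nonneg) (auto simp: zero_le_even_power)
  have eq1: "(\<integral>\<^sup>+ w. ennreal (c * (\<Sum>s\<in>S. (vdot m w (z s)) ^ (2 * r))) \<partial>P m) =
      ennreal (\<integral>w. c * (\<Sum>s\<in>S. (vdot m w (z s)) ^ (2 * r)) \<partial>P m)"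
    using int nn by (intro nn_integral_eq_integral) auto
  have eq2: "(\<integral>w. c * (\<Sum>s\<in>S. (vdot m w (z s)) ^ (2 * r)) \<partial>P m) = c * (\<Sum>s\<in>S. (\<integral>w. (vdot m w (z s)) ^ (2 * r) \<partial>P m))"
    by (simp add: integral_sum int_vdot_pow)
  have le: "c * (\<Sum>s\<in>S. (\<integral>w. (vdot m w (z s)) ^ (2 * r) \<partial>P m)) \<le> c * (\<Sum>s\<in>S. (Lc r * Z) ^ (2 * r))"
  proof (intro mult_left_mono c sum_mono)
    fix s assume s: "s \<in> S"
    have "(\<integral>w. (vdot m w (z s)) ^ (2 * r) \<partial>P m) \<le> (Lc r * vnorm m (z s)) ^ (2 * r)" by (rule mom_bound[OF r])
    also have "\<dots> \<le> (Lc r * Z) ^ (2 * r)"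
      using Z[OF s] Qc_nn vnorm_nn[of m "z s"] unfolding Lc_def by (intro power_mono mult_left_mono) auto
    finally show "(\<integral>w. (vdot m w (z s)) ^ (2 * r) \<partial>P m) \<le> (Lc r * Z) ^ (2 * r)" .
  qed
  have "c * (\<Sum>s\<in>S. (Lc r * Z) ^ (2 * r)) = c * real (card S) * (Lc r * Z) ^ (2 * r)" by simp
  then show ?thesis unfolding eq1 eq2 using le by (intro ennreal_leI) simp
qed

end



lemma pow_le_one_plus:
  fixes v :: real
  assumes "p \<le> 2 * r"
  shows "\<bar>v\<bar> ^ p \<le> 1 + v ^ (2 * r)"
proof (cases "\<bar>v\<bar> \<le> 1")
  case True
  then have "\<bar>v\<bar> ^ p \<le> 1" by (intro power_le_one) auto
  moreover have "0 \<le> v ^ (2 * r)" by (simp add: zero_le_even_power)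
  ultimately show ?thesis by linarith
next
  case False
  then have "\<bar>v\<bar> ^ p \<le> \<bar>v\<bar> ^ (2 * r)" using assms by (intro power_increasing) auto
  then show ?thesis by (simp add: power_even_abs)
qed

theorem lemma11:
  fixes p :: nat and \<mu> :: "real measure" and T0 :: "'a::euclidean_space set" and lam :: real
  assumes "even p" and "p \<ge> 2"
    and "prob_space \<mu>" and "sets \<mu> = sets borel"
    and "(\<integral>x. x \<partial>\<mu>) = 0"
    and "\<forall>k::nat. integrable \<mu> (\<lambda>x. \<bar>x\<bar> ^ k)"
    and "compact T0"
  shows "\<exists>C::real. \<forall>m1::nat. \<forall>f :: 'a \<Rightarrow> nat \<Rightarrow> real.
           m1 \<ge> 1 \<longrightarrow> c01_norm T0 m1 f \<le> ennreal lam \<longrightarrow>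
           (\<integral>\<^sup>+ w. (SUP y\<in>f ` T0. ennreal (\<bar>vdot m1 w y\<bar> ^ p)) \<partial>(PiM {..<m1} (\<lambda>_. \<mu>)))
             \<le> ennreal C"
proof -
  interpret M: momsetup \<mu> using assms(3-6) by (intro momsetup.intro) auto
  define d where "d = DIM('a)"
  define r where "r = p + 2 * d + 1"
  define L where "L = M.Lc r"
  define \<Lambda> where "\<Lambda> = max lam 0"
  have r1: "1 \<le> r" unfolding r_def by simp
  have q4: "4 * d + 1 \<le> 2 * r" unfolding r_def by simp
  have pq: "p \<le> 2 * r" unfolding r_def by simp
  have L1: "1 \<le> L" unfolding L_def M.Lc_def using M.Qc_nn by simp
  have \<Lambda>0: "0 \<le> \<Lambda>" unfolding \<Lambda>_def by simp
  obtain N Cn where Cn: "0 \<le> Cn" and NN: "\<forall>k. finite (N k) \<and> N k \<subseteq> T0 \<and> real (card (N k)) \<le> Cn * 4 ^ (k * d) \<and> (\<forall>x\<in>T0. \<exists>a\<in>N k. dist x a \<le> (1/4) ^ k)"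
  proof -
    have "\<exists>N Cn. 0 \<le> Cn \<and> (\<forall>k. finite (N k) \<and> N k \<subseteq> T0 \<and> real (card (N k)) \<le> Cn * 4 ^ (k * d) \<and> (\<forall>x\<in>T0. \<exists>a\<in>N k. dist x a \<le> (1/4) ^ k))"
      using net_family[OF assms(7)] unfolding d_def .
    then show ?thesis using that by (elim exE conjE)
  qed
  have NNsub: "\<And>k. N k \<subseteq> T0" using NN by blast
  define K0 where "K0 = 2 ^ (2 * r) * Cn * (L * \<Lambda>) ^ (2 * r)"
  define D where "D = Cn ^ 2 * (2 * L * \<Lambda>) ^ (2 * r) * (2 ^ (2 * (2 * r)) * 4 ^ d)"
  define D2 where "D2 = K0 + 2 * D"
  have K0: "0 \<le> K0" unfolding K0_def using Cn L1 \<Lambda>0 by simp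
  have D0: "0 \<le> D" unfolding D_def using Cn L1 \<Lambda>0 by simp
  show ?thesis
  proof (intro exI[of _ "1 + 2 * D2"] allI impI)
    fix m1 :: nat and f :: "'a \<Rightarrow> nat \<Rightarrow> real"
    assume c01: "c01_norm T0 m1 f \<le> ennreal lam"
    have fb: "\<And>x. x \<in> T0 \<Longrightarrow> vnorm m1 (f x) \<le> \<Lambda>" using c01_bounds(1)[OF c01] unfolding \<Lambda>_def .
    have Lip: "\<And>x y. x \<in> T0 \<Longrightarrow> y \<in> T0 \<Longrightarrow> vnorm m1 (\<lambda>i. f x i - f y i) \<le> \<Lambda> * dist x y"
      using c01_bounds(2)[OF c01] unfolding \<Lambda>_def .
    define B where "B k w = (case k of 0 \<Rightarrow> (\<Sum>a\<in>N 0. (vdot m1 w (f a)) ^ (2 * r))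
         | Suc j \<Rightarrow> (\<Sum>ab\<in>{ab \<in> N j \<times> N (Suc j). dist (fst ab) (snd ab) \<le> 2 * (1/4) ^ j}.
                      (vdot m1 w (f (fst ab)) - vdot m1 w (f (snd ab))) ^ (2 * r)))" for k w
    define G where "G w = (\<Sum>k. ennreal (2 ^ ((k + 1) * (2 * r)) * B k w))" for w
    have pw: "ennreal ((vdot m1 w (f x)) ^ (2 * r)) \<le> G w" if x: "x \<in> T0" for w x
      unfolding G_def B_def
      by (rule chain_pointwise[where N = N, OF _ _ _ Lip \<Lambda>0 x r1]) (use NN in blast)+
    have integrand: "(SUP y\<in>f ` T0. ennreal (\<bar>vdot m1 w y\<bar> ^ p)) \<le> 1 + G w" for w
    proof (rule SUP_least)
      fix y assume "y \<in> f ` T0"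
      then obtain x where x: "x \<in> T0" "y = f x" by auto
      have "ennreal (\<bar>vdot m1 w y\<bar> ^ p) \<le> ennreal (1 + (vdot m1 w y) ^ (2 * r))"
        using pq by (intro ennreal_leI pow_le_one_plus)
      also have "\<dots> = 1 + ennreal ((vdot m1 w y) ^ (2 * r))"
        by (simp add: ennreal_plus zero_le_even_power)
      also have "\<dots> \<le> 1 + G w" using pw[OF x(1)] x(2) by (intro add_left_mono) auto
      finally show "ennreal (\<bar>vdot m1 w y\<bar> ^ p) \<le> 1 + G w" .
    qed
    have measB: "(\<lambda>w. 2 ^ ((k + 1) * (2 * r)) * B k w) \<in> borel_measurable (M.P m1)" for k
    proof (cases k)
      case 0
      show ?thesis unfolding 0 B_def
        using M.meas_vdot[measurable] by simp measurable
    next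
      case (Suc j)
      show ?thesis unfolding Suc B_def
        using M.meas_vdot[measurable] by simp measurable
    qed
    have meas: "(\<lambda>w. ennreal (2 ^ ((k + 1) * (2 * r)) * B k w)) \<in> borel_measurable (M.P m1)" for k
      using measurable_compose[OF measB measurable_ennreal] by (simp add: comp_def)
    have t0: "(\<integral>\<^sup>+ w. ennreal (2 ^ ((0 + 1) * (2 * r)) * B 0 w) \<partial>M.P m1) \<le> ennreal K0"
    proof -
      have "(\<integral>\<^sup>+ w. ennreal (2 ^ ((0 + 1) * (2 * r)) * B 0 w) \<partial>M.P m1) =
          (\<integral>\<^sup>+ w. ennreal (2 ^ (2 * r) * (\<Sum>a\<in>N 0. (vdot m1 w (f a)) ^ (2 * r))) \<partial>M.P m1)"
        unfolding B_def by simp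
      also have "\<dots> \<le> ennreal (2 ^ (2 * r) * real (card (N 0)) * (M.Lc r * \<Lambda>) ^ (2 * r))"
        using NN fb by (intro M.sum_mom_bound r1) auto
      also have "\<dots> \<le> ennreal K0"
      proof (intro ennreal_leI)
        have "real (card (N 0)) \<le> Cn" using NN by (metis mult_1_right power_0 mult_0)
        then show "2 ^ (2 * r) * real (card (N 0)) * (M.Lc r * \<Lambda>) ^ (2 * r) \<le> K0"
          unfolding K0_def L_def using L1 \<Lambda>0 L_def by (intro mult_right_mono mult_left_mono) auto
      qed
      finally show ?thesis .
    qed
    have tS: "(\<integral>\<^sup>+ w. ennreal (2 ^ ((Suc j + 1) * (2 * r)) * B (Suc j) w) \<partial>M.P m1) \<le> ennreal (D * (1/2) ^ j)" for j
    proof -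
      define Pj where "Pj = {ab \<in> N j \<times> N (Suc j). dist (fst ab) (snd ab) \<le> 2 * (1/4::real) ^ j}"
      have finPj: "finite Pj" unfolding Pj_def using NN by auto
      have cardPj: "real (card Pj) \<le> (Cn * 4 ^ (j * d)) * (Cn * 4 ^ (Suc j * d))"
      proof -
        have "card Pj \<le> card (N j \<times> N (Suc j))" unfolding Pj_def using NN by (intro card_mono) auto
        also have "\<dots> = card (N j) * card (N (Suc j))" by (rule card_cartesian_product)
        finally have "real (card Pj) \<le> real (card (N j)) * real (card (N (Suc j)))" by (metis of_nat_le_iff of_nat_mult)
        also have "\<dots> \<le> (Cn * 4 ^ (j * d)) * (Cn * 4 ^ (Suc j * d))"
        proof (intro mult_mono)
          show "real (card (N j)) \<le> Cn * 4 ^ (j * d)" using NN by blast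
          show "real (card (N (Suc j))) \<le> Cn * 4 ^ (Suc j * d)" using NN by blast
          show "0 \<le> Cn * 4 ^ (j * d)" using Cn by simp
        qed simp
        finally show ?thesis .
      qed
      have "(\<integral>\<^sup>+ w. ennreal (2 ^ ((Suc j + 1) * (2 * r)) * B (Suc j) w) \<partial>M.P m1) =
          (\<integral>\<^sup>+ w. ennreal (2 ^ ((j + 2) * (2 * r)) * (\<Sum>ab\<in>Pj. (vdot m1 w (\<lambda>i. f (fst ab) i - f (snd ab) i)) ^ (2 * r))) \<partial>M.P m1)"
        unfolding B_def Pj_def vdot_diff by simp
      also have "\<dots> \<le> ennreal (2 ^ ((j + 2) * (2 * r)) * real (card Pj) * (M.Lc r * (\<Lambda> * (2 * (1/4) ^ j))) ^ (2 * r))"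
      proof (intro M.sum_mom_bound finPj r1)
        fix ab assume ab: "ab \<in> Pj"
        then have "fst ab \<in> T0" "snd ab \<in> T0" "dist (fst ab) (snd ab) \<le> 2 * (1/4) ^ j"
          unfolding Pj_def using NNsub[of j] NNsub[of "Suc j"] by auto
        then show "vnorm m1 (\<lambda>i. f (fst ab) i - f (snd ab) i) \<le> \<Lambda> * (2 * (1/4) ^ j)"
          using Lip \<Lambda>0 by (meson mult_left_mono order_trans)
      qed simp
      also have "\<dots> \<le> ennreal (D * (1/2) ^ j)"
      proof (intro ennreal_leI)
        have "2 ^ ((j + 2) * (2 * r)) * real (card Pj) * (M.Lc r * (\<Lambda> * (2 * (1/4) ^ j))) ^ (2 * r)
            \<le> 2 ^ ((j + 2) * (2 * r)) * ((Cn * 4 ^ (j * d)) * (Cn * 4 ^ (Suc j * d))) * (M.Lc r * (\<Lambda> * (2 * (1/4) ^ j))) ^ (2 * r)"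
          using cardPj L1 \<Lambda>0 L_def by (intro mult_right_mono mult_left_mono) auto
        also have "\<dots> = (Cn ^ 2 * (2 * L * \<Lambda>) ^ (2 * r)) * (2 ^ ((j + 2) * (2 * r)) * 4 ^ (j * d) * 4 ^ ((j + 1) * d) * ((1/4) ^ j) ^ (2 * r))"
          unfolding L_def by (simp add: power_mult_distrib power2_eq_square mult_ac)
        also have "\<dots> \<le> (Cn ^ 2 * (2 * L * \<Lambda>) ^ (2 * r)) * (2 ^ (2 * (2 * r)) * 4 ^ d * (1/2) ^ j)"
          using L1 \<Lambda>0 by (intro mult_left_mono geo_aux q4) auto
        also have "\<dots> = D * (1/2) ^ j" unfolding D_def by (simp add: mult_ac)
        finally show "2 ^ ((j + 2) * (2 * r)) * real (card Pj) * (M.Lc r * (\<Lambda> * (2 * (1/4) ^ j))) ^ (2 * r) \<le> D * (1/2) ^ j" .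
      qed
      finally show ?thesis .
    qed
    have tall: "(\<integral>\<^sup>+ w. ennreal (2 ^ ((k + 1) * (2 * r)) * B k w) \<partial>M.P m1) \<le> ennreal (D2 * (1/2) ^ k)" for k
    proof (cases k)
      case 0
      have h: "ennreal K0 \<le> ennreal (D2 * (1/2) ^ 0)" unfolding D2_def using D0 by (intro ennreal_leI) simp
      show ?thesis unfolding 0 by (rule order_trans[OF t0 h])
    next
      case (Suc j)
      have h: "ennreal (D * (1/2) ^ j) \<le> ennreal (D2 * (1/2) ^ Suc j)"
        unfolding D2_def using D0 K0 by (intro ennreal_leI) (simp add: field_simps)
      show ?thesis unfolding Suc by (rule order_trans[OF tS h])
    qed
    interpret PP: prob_space "M.P m1" by (rule M.prob_P)
    have measG: "G \<in> borel_measurable (M.P m1)" unfolding G_def by (rule borel_measurable_suminf_order) (rule meas)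
    have "(\<integral>\<^sup>+ w. (SUP y\<in>f ` T0. ennreal (\<bar>vdot m1 w y\<bar> ^ p)) \<partial>M.P m1) \<le> (\<integral>\<^sup>+ w. (1 + G w) \<partial>M.P m1)"
      by (intro nn_integral_mono integrand)
    also have "\<dots> = (\<integral>\<^sup>+ w. 1 \<partial>M.P m1) + (\<integral>\<^sup>+ w. G w \<partial>M.P m1)"
      using measG by (intro nn_integral_add) auto
    also have "\<dots> = 1 + (\<integral>\<^sup>+ w. G w \<partial>M.P m1)" by (simp add: PP.emeasure_space_1)
    also have "(\<integral>\<^sup>+ w. G w \<partial>M.P m1) = (\<Sum>k. \<integral>\<^sup>+ w. ennreal (2 ^ ((k + 1) * (2 * r)) * B k w) \<partial>M.P m1)"
      unfolding G_def using meas by (intro nn_integral_suminf) auto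
    also have "1 + (\<Sum>k. \<integral>\<^sup>+ w. ennreal (2 ^ ((k + 1) * (2 * r)) * B k w) \<partial>M.P m1) \<le> 1 + (\<Sum>k. ennreal (D2 * (1/2) ^ k))"
      by (intro add_left_mono suminf_le tall summableI)
    also have "(\<Sum>k. ennreal (D2 * (1/2) ^ k)) = ennreal (D2 * 2)"
    proof (rule suminf_ennreal_eq)
      show "0 \<le> D2 * (1/2) ^ k" for k using D0 K0 unfolding D2_def by simp
      have "(\<lambda>k. (1/2::real) ^ k) sums (1 / (1 - 1/2))" by (rule geometric_sums) simp
      then show "(\<lambda>k. D2 * (1/2) ^ k) sums (D2 * 2)" using sums_mult[of _ "2" D2] by simp
    qed
    also have "1 + ennreal (D2 * 2) = ennreal (1 + 2 * D2)"
    proof -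
      have "0 \<le> D2" using D0 K0 unfolding D2_def by simp
      then show ?thesis by (simp add: ennreal_plus mult.commute)
    qed
    finally show "(\<integral>\<^sup>+ w. (SUP y\<in>f ` T0. ennreal (\<bar>vdot m1 w y\<bar> ^ p)) \<partial>(PiM {..<m1} (\<lambda>_. \<mu>))) \<le> ennreal (1 + 2 * D2)"
      unfolding M.P_def .
  qed
qed



end
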